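(* Let $\sigma^{\rm TF}$ be the minimizer of $\mathcal{E}^{\rm TF}$ over $\mathcal{M}^{\rm TF}$ and $\Phi^{\rm TF}:=V_{\rm nuc}+\sigma^{\rm TF}*\log|\cdot|$. There exists $\lambda\in\mathbb{R}$ such that for almost every $x$: $\Phi^{\rm TF}(x)\geq\lambda$ if $\sigma^{\rm TF}(x)=1$; $\Phi^{\rm TF}(x)=\lambda$ if $0<\sigma^{\rm TF}(x)<1$; $\Phi^{\rm TF}(x)\leq\lambda$ if $\sigma^{\rm TF}(x)=0$.
   Context: Let $K\ge1$ be an integer, $x_1,\ldots,x_K\in\mathbb{R}^2$, $V_{\rm nuc}(x)=-\sum_{i=1}^K\log|x-x_i|$, $D(\sigma,\sigma)=-\frac12\iint\sigma(x)\log|x-y|\sigma(y)\,dx\,dy$, $\mathcal{E}^{\rm TF}[\sigma]=-\int V_{\rm nuc}\sigma+D(\sigma,\sigma)$, and $\mathcal{M}^{\rm TF}=\{\sigma\in L^\infty(\mathbb{R}^2)\cap L^1(\mathbb{R}^2,\log(2+|x|)dx):0\leq\sigma\leq1,\ \int\sigma=K\}$. The functional $\mathcal{E}^{\rm TF}$ has a unique minimizer $\sigma^{\rm TF}$ on $\mathcal{M}^{\rm TF}$. *)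

theory Defs
  imports "HOL-Analysis.Analysis"
begin

definition V_nuc :: "nat \<Rightarrow> (nat \<Rightarrow> real^2) \<Rightarrow> real^2 \<Rightarrow> real" where
  "V_nuc K xs x = - (\<Sum>i<K. ln (norm (x - xs i)))"

definition D_TF :: "(real^2 \<Rightarrow> real) \<Rightarrow> (real^2 \<Rightarrow> real) \<Rightarrow> real" where
  "D_TF \<sigma> \<tau> = - (1/2) * (\<integral>x. (\<integral>y. \<sigma> x * ln (norm (x - y)) * \<tau> y \<partial>lborel) \<partial>lborel)"

definition E_TF :: "nat \<Rightarrow> (nat \<Rightarrow> real^2) \<Rightarrow> (real^2 \<Rightarrow> real) \<Rightarrow> real" where
  "E_TF K xs \<sigma> = - (\<integral>x. V_nuc K xs x * \<sigma> x \<partial>lborel) + D_TF \<sigma> \<sigma>"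

definition M_TF :: "nat \<Rightarrow> (real^2 \<Rightarrow> real) set" where
  "M_TF K = {\<sigma>. \<sigma> \<in> borel_measurable lborel \<and> (\<forall>x. 0 \<le> \<sigma> x \<and> \<sigma> x \<le> 1)
      \<and> integrable lborel (\<lambda>x. \<sigma> x * ln (2 + norm x))
      \<and> (\<integral>x. \<sigma> x \<partial>lborel) = real K}"

definition Phi_TF :: "nat \<Rightarrow> (nat \<Rightarrow> real^2) \<Rightarrow> (real^2 \<Rightarrow> real) \<Rightarrow> real^2 \<Rightarrow> real" where
  "Phi_TF K xs \<sigma> x = V_nuc K xs x + (\<integral>y. \<sigma> y * ln (norm (x - y)) \<partial>lborel)"

end

theory Submission
  imports Defs
begin

definition Nf :: "real^2 \<Rightarrow> real" where
  "Nf z = (if norm z < 1 then - ln (norm z) else 0)"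

lemma Nf_nonneg: "Nf z \<ge> 0"
  unfolding Nf_def using ln_le_zero_iff[of "norm z"] by (cases "z = 0") auto

lemma Nf_meas[measurable]: "Nf \<in> borel_measurable borel"
  unfolding Nf_def by measurable

lemma Nf_pointwise:
  "ennreal (Nf z) \<le> (\<Sum>k. ennreal (ln 2) * indicator (ball (0::real^2) ((1/2)^k)) z)"
proof (cases "norm z < 1 \<and> z \<noteq> 0")
  case False
  then have "Nf z = 0" unfolding Nf_def by auto
  then show ?thesis by simp
next
  case True
  then have z0: "0 < norm z" and z1: "norm z < 1" by auto
  have ex: "\<exists>m::nat. (1/2::real)^m \<le> norm z"
    using real_arch_pow_inv[OF z0, of "1/2"] by (auto simp: power_one_over intro: less_imp_le)
  define m where "m = (LEAST m::nat. (1/2::real)^m \<le> norm z)"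
  have m1: "(1/2::real)^m \<le> norm z" unfolding m_def by (rule LeastI_ex[OF ex])
  have m2: "\<And>k. k < m \<Longrightarrow> norm z < (1/2::real)^k"
    unfolding m_def using not_less_Least by fastforce
  have "Nf z = - ln (norm z)" unfolding Nf_def using z1 by simp
  also have "\<dots> \<le> - ln ((1/2::real)^m)"
    using m1 z0 by simp
  also have "\<dots> = real m * ln 2" by (simp add: ln_realpow ln_div)
  finally have b: "Nf z \<le> real m * ln 2" .
  have "(\<Sum>k<m. ennreal (ln 2) * indicator (ball (0::real^2) ((1/2)^k)) z) = (\<Sum>k<m. ennreal (ln 2))"
    by (intro sum.cong) (auto simp: m2 indicator_def)
  also have "\<dots> = ennreal (real m * ln 2)"
    by (simp add: ennreal_mult' mult.commute ennreal_of_nat_eq_real_of_nat)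
  finally have e: "(\<Sum>k<m. ennreal (ln 2) * indicator (ball (0::real^2) ((1/2)^k)) z) = ennreal (real m * ln 2)" .
  have "ennreal (Nf z) \<le> ennreal (real m * ln 2)" using b by (simp add: ennreal_leI)
  also have "\<dots> \<le> (\<Sum>k. ennreal (ln 2) * indicator (ball (0::real^2) ((1/2)^k)) z)"
    unfolding e[symmetric] by (rule sum_le_suminf) auto
  finally show ?thesis .
qed

lemma Nf_integrable: "integrable lborel Nf"
proof (rule integrableI_nonneg)
  show "Nf \<in> borel_measurable lborel" by measurable
  show "AE x in lborel. 0 \<le> Nf x" by (simp add: Nf_nonneg)
  define C where "C = unit_ball_vol (real DIM(real^2))"
  have C0: "C \<ge> 0" unfolding C_def by simp
  have pw: "\<And>n. (1/2::real)^(n*2) = (1/4)^n"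
  proof -
    fix n :: nat have "(1/2::real)^(n*2) = ((1/2)^2)^n" by (simp only: mult.commute[of n 2] power_mult)
    then show "(1/2::real)^(n*2) = (1/4)^n" by (simp add: power2_eq_square)
  qed
  have [measurable]: "\<And>r. ball (0::real^2) r \<in> sets borel" by simp
  have "(\<integral>\<^sup>+ x. ennreal (Nf x) \<partial>lborel) \<le>
        (\<integral>\<^sup>+ x. (\<Sum>k. ennreal (ln 2) * indicator (ball (0::real^2) ((1/2)^k)) x) \<partial>lborel)"
    by (intro nn_integral_mono Nf_pointwise)
  also have "\<dots> = (\<Sum>k. \<integral>\<^sup>+ x. ennreal (ln 2) * indicator (ball (0::real^2) ((1/2)^k)) x \<partial>lborel)"
    by (intro nn_integral_suminf) measurable
  also have "\<dots> = (\<Sum>k. ennreal (ln 2 * C * (1/4)^k))"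
    by (intro suminf_cong) (simp add: nn_integral_cmult emeasure_ball C_def ennreal_mult'[symmetric] power_mult_distrib[symmetric] pw flip: power_mult)
  also have "\<dots> = ennreal (\<Sum>k. ln 2 * C * (1/4)^k)"
    by (intro suminf_ennreal2) (auto simp: C0 intro!: summable_mult summable_geometric)
  also have "\<dots> < \<infinity>" by simp
  finally show "(\<integral>\<^sup>+ x. ennreal (Nf x) \<partial>lborel) < \<infinity>" .
qed

definition cls :: "(real^2 \<Rightarrow> real) \<Rightarrow> bool" where
  "cls f \<longleftrightarrow> f \<in> borel_measurable lborel \<and> (\<forall>x. \<bar>f x\<bar> \<le> 1) \<and>
     integrable lborel (\<lambda>x. f x * ln (2 + norm x))"

definition G :: "(real^2 \<Rightarrow> real) \<Rightarrow> real^2 \<Rightarrow> real" where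
  "G f x = (\<integral>y. ln (norm (x - y)) * f y \<partial>lborel)"

definition INf :: real where "INf = (\<integral>z. Nf z \<partial>lborel)"

lemma ln2_le: "ln 2 \<le> ln (2 + norm (x::real^2))" 
  by (rule ln_le_cancel_iff[THEN iffD2]) (auto intro: add_pos_nonneg)
lemma ln2p_nonneg: "0 \<le> ln (2 + norm (x::real^2))" by simp

lemma cls_integrable:
  assumes "cls f" shows "integrable lborel f"
proof -
  have m[measurable]: "f \<in> borel_measurable lborel" using assms cls_def by auto
  have i: "integrable lborel (\<lambda>x. f x * ln (2 + norm x) * (1 / ln 2))"
    using assms cls_def by auto
  show ?thesis
  proof (rule Bochner_Integration.integrable_bound[OF i])
    show "f \<in> borel_measurable lborel" by (rule m)
    show "AE x in lborel. norm (f x) \<le> norm (f x * ln (2 + norm x) * (1 / ln 2))"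
    proof (intro AE_I2)
      fix x :: "real^2"
      have "\<bar>f x\<bar> * 1 \<le> \<bar>f x\<bar> * (ln (2 + norm x) / ln 2)"
        by (intro mult_left_mono) (auto simp: ln2_le)
      then show "norm (f x) \<le> norm (f x * ln (2 + norm x) * (1 / ln 2))"
        by (simp add: abs_mult)
    qed
  qed
qed

lemma log_bound:
  fixes x y :: "real^2"
  shows "\<bar>ln (norm (x - y))\<bar> \<le> ln (2 + norm x) + ln (2 + norm y) + Nf (x - y)"
proof (cases "norm (x - y) < 1")
  case True
  show ?thesis
  proof (cases "x = y")
    case True then show ?thesis using Nf_nonneg[of 0] by simp
  next
    case False
    then have "0 < norm (x - y)" by simp
    then have "\<bar>ln (norm (x - y))\<bar> = Nf (x - y)"
      using True by (simp add: Nf_def ln_le_zero_iff abs_if)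
    then show ?thesis by simp
  qed
next
  case False
  then have "\<bar>ln (norm (x - y))\<bar> = ln (norm (x - y))" by simp
  also have "\<dots> \<le> ln ((2 + norm x) * (2 + norm y))"
  proof -
    have p: "0 \<le> norm x * norm y" by simp
    have "norm (x - y) \<le> (2 + norm x) * (2 + norm y)"
    proof -
      have "(2 + norm x) * (2 + norm y) = 4 + 2 * norm x + 2 * norm y + norm x * norm y"
        by (simp add: algebra_simps)
      then show ?thesis using norm_triangle_ineq4[of x y] p norm_ge_zero[of x] norm_ge_zero[of y]
        by linarith
    qed
    moreover have "0 < norm (x - y)" using False by (cases "x = y") auto
    ultimately show ?thesis by (rule ln_mono)
  qed
  also have "\<dots> = ln (2 + norm x) + ln (2 + norm y)"
    by (rule ln_mult_pos) (auto intro: add_pos_nonneg)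
  finally show ?thesis using Nf_nonneg[of "x - y"] by simp
qed

lemma Nf_shift_integrable: "integrable lborel (\<lambda>y. Nf (x - y))"
proof -
  have "integrable (distr lborel borel ((+) (-x))) Nf"
    by (simp add: lborel_distr_plus Nf_integrable)
  then have "integrable lborel (\<lambda>y. Nf (-x + y))"
    by (subst (asm) integrable_distr_eq) auto
  moreover have "\<And>y. Nf (-x + y) = Nf (x - y)"
    by (simp add: Nf_def norm_minus_commute)
  ultimately show ?thesis by simp
qed

lemma Nf_shift_integral: "(\<integral>y. Nf (x - y) \<partial>lborel) = INf"
proof -
  have e: "\<And>y. Nf (-x + y) = Nf (x - y)"
    by (simp add: Nf_def norm_minus_commute)
  have "(\<integral>y. Nf (x - y) \<partial>lborel) = (\<integral>y. Nf (-x + y) \<partial>lborel)"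
    by (simp only: e)
  also have "\<dots> = (\<integral>y. Nf y \<partial>distr lborel borel ((+) (-x)))"
    by (subst integral_distr) auto
  finally show ?thesis by (simp add: lborel_distr_plus INf_def)
qed

definition I1 :: "(real^2 \<Rightarrow> real) \<Rightarrow> real" where "I1 f = (\<integral>y. \<bar>f y\<bar> \<partial>lborel)"
definition I2 :: "(real^2 \<Rightarrow> real) \<Rightarrow> real" where "I2 f = (\<integral>y. \<bar>f y * ln (2 + norm y)\<bar> \<partial>lborel)"
definition Bd :: "(real^2 \<Rightarrow> real) \<Rightarrow> real^2 \<Rightarrow> real" where
  "Bd f x = ln (2 + norm x) * I1 f + I2 f + INf"

lemma cls_meas[measurable_dest]: "cls f \<Longrightarrow> f \<in> borel_measurable lborel"
  by (simp add: cls_def)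

lemma cls_abs: "cls f \<Longrightarrow> cls (\<lambda>x. \<bar>f x\<bar>)"
proof -
  assume a: "cls f"
  have "\<And>x::real^2. \<bar>f x\<bar> * ln (2 + norm x) = \<bar>f x * ln (2 + norm x)\<bar>"
    using ln2p_nonneg by (simp add: abs_mult)
  with a show ?thesis unfolding cls_def by (auto intro: integrable_abs)
qed

lemma I1_nonneg: "I1 f \<ge> 0" unfolding I1_def by simp

lemma kern_bound_pt:
  assumes "cls f"
  shows "\<bar>ln (norm (x - y)) * f y\<bar> \<le> ln (2 + norm x) * \<bar>f y\<bar> + \<bar>f y * ln (2 + norm y)\<bar> + Nf (x - y)"
proof -
  have f1: "\<bar>f y\<bar> \<le> 1" using assms cls_def by auto
  have "\<bar>ln (norm (x - y)) * f y\<bar> = \<bar>ln (norm (x - y))\<bar> * \<bar>f y\<bar>" by (simp add: abs_mult)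
  also have "\<dots> \<le> (ln (2 + norm x) + ln (2 + norm y) + Nf (x - y)) * \<bar>f y\<bar>"
    by (intro mult_right_mono log_bound) auto
  also have "\<dots> = ln (2 + norm x) * \<bar>f y\<bar> + \<bar>f y * ln (2 + norm y)\<bar> + Nf (x - y) * \<bar>f y\<bar>"
    by (simp add: algebra_simps abs_mult)
  also have "Nf (x - y) * \<bar>f y\<bar> \<le> Nf (x - y)"
    using f1 Nf_nonneg[of "x - y"] by (simp add: mult_left_le)
  finally show ?thesis by simp
qed

lemma kern_integrable:
  assumes "cls f"
  shows "integrable lborel (\<lambda>y. ln (norm (x - y)) * f y)"
proof (rule Bochner_Integration.integrable_bound)
  have [measurable]: "f \<in> borel_measurable lborel" using assms by (rule cls_meas)
  show "integrable lborel (\<lambda>y. ln (2 + norm x) * \<bar>f y\<bar> + \<bar>f y * ln (2 + norm y)\<bar> + Nf (x - y))"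
    using assms cls_integrable[OF assms] Nf_shift_integrable[of x] unfolding cls_def
    by (intro Bochner_Integration.integrable_add integrable_mult_right integrable_abs) auto
  show "(\<lambda>y. ln (norm (x - y)) * f y) \<in> borel_measurable lborel" by measurable
  show "AE y in lborel. norm (ln (norm (x - y)) * f y) \<le>
      norm (ln (2 + norm x) * \<bar>f y\<bar> + \<bar>f y * ln (2 + norm y)\<bar> + Nf (x - y))"
    using kern_bound_pt[OF assms, of x] Nf_nonneg by (intro AE_I2) (auto intro: order_trans)
qed

lemma kern_abs_bound:
  assumes "cls f"
  shows "(\<integral>y. \<bar>ln (norm (x - y)) * f y\<bar> \<partial>lborel) \<le> Bd f x"
proof -
  have [measurable]: "f \<in> borel_measurable lborel" using assms by (rule cls_meas)
  have i1: "integrable lborel (\<lambda>y. \<bar>f y\<bar>)" using cls_integrable[OF assms] by auto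
  have i2: "integrable lborel (\<lambda>y. \<bar>f y * ln (2 + norm y)\<bar>)" using assms cls_def by auto
  have "(\<integral>y. \<bar>ln (norm (x - y)) * f y\<bar> \<partial>lborel) \<le>
        (\<integral>y. ln (2 + norm x) * \<bar>f y\<bar> + \<bar>f y * ln (2 + norm y)\<bar> + Nf (x - y) \<partial>lborel)"
    using i1 i2 Nf_shift_integrable[of x] kern_integrable[OF assms, of x]
    by (intro integral_mono kern_bound_pt[OF assms]) auto
  also have "\<dots> = Bd f x"
    using i1 i2 Nf_shift_integrable[of x]
    by (simp add: Bd_def I1_def I2_def Nf_shift_integral)
  finally show ?thesis .
qed

lemma G_bound:
  assumes "cls f" shows "\<bar>G f x\<bar> \<le> Bd f x"
proof -
  have "\<bar>G f x\<bar> \<le> (\<integral>y. \<bar>ln (norm (x - y)) * f y\<bar> \<partial>lborel)"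
    unfolding G_def using integral_norm_bound[of lborel "\<lambda>y. ln (norm (x - y)) * f y"] by simp
  also have "\<dots> \<le> Bd f x" by (rule kern_abs_bound[OF assms])
  finally show ?thesis .
qed

lemma prod_meas:
  assumes "cls f"
  shows "(\<lambda>(x, y). ln (norm (x - y)) * f y) \<in> borel_measurable (lborel \<Otimes>\<^sub>M (lborel :: (real^2) measure))"
proof -
  have [measurable]: "f \<in> borel_measurable lborel" using assms by (rule cls_meas)
  show ?thesis by measurable
qed

lemma G_meas:
  assumes "cls f" shows "G f \<in> borel_measurable lborel"
  unfolding G_def using lborel.borel_measurable_lebesgue_integral[OF prod_meas[OF assms]] by simp

lemma Gabs_meas:
  assumes "cls f" shows "(\<lambda>x. \<integral>y. \<bar>ln (norm (x - y)) * f y\<bar> \<partial>lborel) \<in> borel_measurable lborel"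
proof -
  have [measurable]: "f \<in> borel_measurable lborel" using assms by (rule cls_meas)
  have "(\<lambda>(x, y). \<bar>ln (norm (x - y)) * f y\<bar>) \<in> borel_measurable (lborel \<Otimes>\<^sub>M (lborel :: (real^2) measure))"
    by measurable
  from lborel.borel_measurable_lebesgue_integral[OF this] show ?thesis by simp
qed

lemma bd_integrable:
  assumes "cls f" "cls g" "H \<in> borel_measurable lborel" "\<And>x. \<bar>H x\<bar> \<le> Bd f x"
  shows "integrable lborel (\<lambda>x. g x * H x)"
proof (rule Bochner_Integration.integrable_bound)
  have [measurable]: "g \<in> borel_measurable lborel" using assms by (intro cls_meas)
  have [measurable]: "H \<in> borel_measurable lborel" using assms by simp
  show "integrable lborel (\<lambda>x. I1 f * \<bar>g x * ln (2 + norm x)\<bar> + (I2 f + INf) * \<bar>g x\<bar>)"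
    using assms(2) cls_integrable[OF assms(2)] unfolding cls_def
    by (intro Bochner_Integration.integrable_add integrable_mult_right integrable_abs) auto
  show "(\<lambda>x. g x * H x) \<in> borel_measurable lborel" by measurable
  show "AE x in lborel. norm (g x * H x) \<le> norm (I1 f * \<bar>g x * ln (2 + norm x)\<bar> + (I2 f + INf) * \<bar>g x\<bar>)"
  proof (intro AE_I2)
    fix x
    have "\<bar>g x * H x\<bar> = \<bar>g x\<bar> * \<bar>H x\<bar>" by (simp add: abs_mult)
    also have "\<dots> \<le> \<bar>g x\<bar> * Bd f x" by (intro mult_left_mono assms(4)) auto
    also have "\<dots> = I1 f * \<bar>g x * ln (2 + norm x)\<bar> + (I2 f + INf) * \<bar>g x\<bar>"
      by (simp add: Bd_def abs_mult algebra_simps)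
    finally have "\<bar>g x * H x\<bar> \<le> I1 f * \<bar>g x * ln (2 + norm x)\<bar> + (I2 f + INf) * \<bar>g x\<bar>" .
    then show "norm (g x * H x) \<le> norm (I1 f * \<bar>g x * ln (2 + norm x)\<bar> + (I2 f + INf) * \<bar>g x\<bar>)"
      by simp
  qed
qed

lemma GG_integrable:
  assumes "cls f" "cls g" shows "integrable lborel (\<lambda>x. g x * G f x)"
  using bd_integrable[OF assms G_meas[OF assms(1)] G_bound[OF assms(1)]] .

lemma fubini_sym:
  assumes f: "cls f" and g: "cls g"
  shows "(\<integral>x. g x * G f x \<partial>lborel) = (\<integral>y. f y * G g y \<partial>lborel)"
proof -
  have [measurable]: "f \<in> borel_measurable lborel" by (rule cls_meas[OF f])
  have [measurable]: "g \<in> borel_measurable lborel" by (rule cls_meas[OF g])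
  define h where "h = (\<lambda>x y. g x * (ln (norm (x - y)) * f y))"
  have int: "integrable (lborel \<Otimes>\<^sub>M lborel) (case_prod h)"
  proof (rule lborel_pair.Fubini_integrable)
    show "case_prod h \<in> borel_measurable (lborel \<Otimes>\<^sub>M lborel)" unfolding h_def by measurable
    have e: "(\<lambda>x. \<integral>y. norm (case_prod h (x, y)) \<partial>lborel) =
          (\<lambda>x. \<bar>g x\<bar> * (\<integral>y. \<bar>ln (norm (x - y)) * f y\<bar> \<partial>lborel))"
      unfolding h_def by (simp add: abs_mult mult.assoc)
    have "integrable lborel (\<lambda>x. \<bar>g x\<bar> * (\<integral>y. \<bar>ln (norm (x - y)) * f y\<bar> \<partial>lborel))"
      using kern_abs_bound[OF f] 
      by (intro bd_integrable[OF f cls_abs[OF g] Gabs_meas[OF f]]) auto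
    then show "integrable lborel (\<lambda>x. \<integral>y. norm (case_prod h (x, y)) \<partial>lborel)" unfolding e .
    show "AE x in lborel. integrable lborel (\<lambda>y. case_prod h (x, y))"
      unfolding h_def using kern_integrable[OF f] by auto
  qed
  have "(\<integral>y. (\<integral>x. h x y \<partial>lborel) \<partial>lborel) = (\<integral>x. (\<integral>y. h x y \<partial>lborel) \<partial>lborel)"
    by (rule lborel_pair.Fubini_integral[OF int])
  moreover have "\<And>x. (\<integral>y. h x y \<partial>lborel) = g x * G f x"
    unfolding h_def G_def by simp
  moreover have "\<And>y. (\<integral>x. h x y \<partial>lborel) = f y * G g y"
  proof -
    fix y
    have "\<And>x. h x y = f y * (ln (norm (y - x)) * g x)"
      unfolding h_def by (simp add: norm_minus_commute)
    then show "(\<integral>x. h x y \<partial>lborel) = f y * G g y" unfolding G_def by simp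
  qed
  ultimately show ?thesis by simp
qed

lemma M_cls: "\<tau> \<in> M_TF K \<Longrightarrow> cls \<tau>"
  unfolding M_TF_def cls_def by (auto simp: abs_le_iff)

lemma M_meas: "\<tau> \<in> M_TF K \<Longrightarrow> \<tau> \<in> borel_measurable lborel"
  unfolding M_TF_def by auto

lemma diff_cls:
  assumes "\<tau> \<in> M_TF K" "\<sigma> \<in> M_TF K" shows "cls (\<lambda>x. \<tau> x - \<sigma> x)"
proof -
  have "\<And>x. (\<tau> x - \<sigma> x) * ln (2 + norm x) = \<tau> x * ln (2 + norm x) - \<sigma> x * ln (2 + norm x)"
    by (simp add: algebra_simps)
  moreover have "\<And>x. \<bar>\<tau> x - \<sigma> x\<bar> \<le> 1"
  proof -
    fix x
    have "0 \<le> \<tau> x" "\<tau> x \<le> 1" "0 \<le> \<sigma> x" "\<sigma> x \<le> 1" using assms unfolding M_TF_def by auto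
    then show "\<bar>\<tau> x - \<sigma> x\<bar> \<le> 1" by linarith
  qed
  ultimately show ?thesis using assms unfolding M_TF_def cls_def by auto
qed

lemma V_integrable:
  assumes "cls f" shows "integrable lborel (\<lambda>x. V_nuc K xs x * f x)"
proof -
  have "integrable lborel (\<lambda>x. ln (norm (x - xs i)) * f x)" for i
    using kern_integrable[OF assms, of "xs i"] by (simp add: norm_minus_commute)
  then have "integrable lborel (\<lambda>x. - (\<Sum>i<K. ln (norm (x - xs i)) * f x))" by auto
  moreover have "\<And>x. V_nuc K xs x * f x = - (\<Sum>i<K. ln (norm (x - xs i)) * f x)"
    unfolding V_nuc_def by (simp add: sum_distrib_right)
  ultimately show ?thesis by simp
qed

lemma E_expr: "E_TF K xs f = - (\<integral>x. V_nuc K xs x * f x \<partial>lborel) - 1/2 * (\<integral>x. f x * G f x \<partial>lborel)"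
proof -
  have "\<And>x. (\<integral>y. f x * ln (norm (x - y)) * f y \<partial>lborel) = f x * G f x"
    unfolding G_def by (simp add: mult.assoc)
  then show ?thesis unfolding E_TF_def D_TF_def by simp
qed

lemma Phi_G: "Phi_TF K xs f x = V_nuc K xs x + G f x"
  unfolding Phi_TF_def G_def by (simp add: mult.commute)

lemma first_var:
  assumes s: "\<sigma> \<in> M_TF K" and t: "\<tau> \<in> M_TF K"
    and min: "\<forall>\<tau> \<in> M_TF K. E_TF K xs \<sigma> \<le> E_TF K xs \<tau>"
  shows "(\<integral>x. Phi_TF K xs \<sigma> x * (\<tau> x - \<sigma> x) \<partial>lborel) \<le> 0"
proof -
  define \<eta> where "\<eta> = (\<lambda>x. \<tau> x - \<sigma> x)"
  define V where "V = V_nuc K xs"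
  have cs: "cls \<sigma>" using s by (rule M_cls)
  have ce: "cls \<eta>" unfolding \<eta>_def using diff_cls[OF t s] .
  have [measurable]: "\<sigma> \<in> borel_measurable lborel" by (rule cls_meas[OF cs])
  have [measurable]: "\<eta> \<in> borel_measurable lborel" by (rule cls_meas[OF ce])
  have iVs: "integrable lborel (\<lambda>x. V x * \<sigma> x)" unfolding V_def by (rule V_integrable[OF cs])
  have iVe: "integrable lborel (\<lambda>x. V x * \<eta> x)" unfolding V_def by (rule V_integrable[OF ce])
  have iss: "integrable lborel (\<lambda>x. \<sigma> x * G \<sigma> x)" by (rule GG_integrable[OF cs cs])
  have ise: "integrable lborel (\<lambda>x. \<sigma> x * G \<eta> x)" by (rule GG_integrable[OF ce cs])
  have ies: "integrable lborel (\<lambda>x. \<eta> x * G \<sigma> x)" by (rule GG_integrable[OF cs ce])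
  have iee: "integrable lborel (\<lambda>x. \<eta> x * G \<eta> x)" by (rule GG_integrable[OF ce ce])
  have fub: "(\<integral>x. \<sigma> x * G \<eta> x \<partial>lborel) = (\<integral>x. \<eta> x * G \<sigma> x \<partial>lborel)"
    by (rule fubini_sym[OF ce cs])
  define A where "A = (\<integral>x. V x * \<eta> x \<partial>lborel)"
  define B where "B = (\<integral>x. \<eta> x * G \<sigma> x \<partial>lborel)"
  define Q where "Q = (\<integral>x. \<eta> x * G \<eta> x \<partial>lborel)"
  have key: "A + B + u * Q / 2 \<le> 0" if u: "0 < u" "u \<le> 1" for u :: real
  proof -
    define st where "st = (\<lambda>x. \<sigma> x + u * \<eta> x)"
    have stM: "st \<in> M_TF K"
    proof -
      have [measurable]: "\<tau> \<in> borel_measurable lborel" using t by (rule M_meas)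
      have b: "0 \<le> st x \<and> st x \<le> 1" for x
      proof -
        have "st x = (1 - u) * \<sigma> x + u * \<tau> x" unfolding st_def \<eta>_def by (simp add: algebra_simps)
        moreover have "0 \<le> \<sigma> x" "\<sigma> x \<le> 1" "0 \<le> \<tau> x" "\<tau> x \<le> 1" using s t unfolding M_TF_def by auto
        ultimately show ?thesis using u
          by (auto intro!: add_nonneg_nonneg mult_nonneg_nonneg
            intro: order_trans[OF add_mono[OF mult_left_mono mult_left_mono]])
      qed
      have i1: "integrable lborel (\<lambda>x. \<sigma> x * ln (2 + norm x))" using s unfolding M_TF_def by auto
      have i2: "integrable lborel (\<lambda>x. \<eta> x * ln (2 + norm x))" using ce unfolding cls_def by auto
      have "integrable lborel (\<lambda>x. \<sigma> x * ln (2 + norm x) + u * (\<eta> x * ln (2 + norm x)))"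
        using i1 i2 by auto
      moreover have "\<And>x. st x * ln (2 + norm x) = \<sigma> x * ln (2 + norm x) + u * (\<eta> x * ln (2 + norm x))"
        unfolding st_def by (simp add: algebra_simps)
      ultimately have i3: "integrable lborel (\<lambda>x. st x * ln (2 + norm x))" by simp
      have ie: "integrable lborel \<eta>" by (rule cls_integrable[OF ce])
      have is': "integrable lborel \<sigma>" by (rule cls_integrable[OF cs])
      have it: "integrable lborel \<tau>" by (rule cls_integrable[OF M_cls[OF t]])
      have "(\<integral>x. st x \<partial>lborel) = (\<integral>x. \<sigma> x \<partial>lborel) + u * ((\<integral>x. \<tau> x \<partial>lborel) - (\<integral>x. \<sigma> x \<partial>lborel))"
        unfolding st_def \<eta>_def using ie is' it by simp
      also have "\<dots> = real K" using s t unfolding M_TF_def by simp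
      finally show ?thesis using b i3 unfolding M_TF_def st_def by auto
    qed
    have cst: "cls st" using stM by (rule M_cls)
    have eG: "G st x = G \<sigma> x + u * G \<eta> x" for x
    proof -
      have "\<And>y. ln (norm (x - y)) * st y = ln (norm (x - y)) * \<sigma> y + u * (ln (norm (x - y)) * \<eta> y)"
        unfolding st_def by (simp add: algebra_simps)
      then show ?thesis unfolding G_def
        using kern_integrable[OF cs, of x] kern_integrable[OF ce, of x] by simp
    qed
    have eV: "(\<integral>x. V x * st x \<partial>lborel) = (\<integral>x. V x * \<sigma> x \<partial>lborel) + u * A"
    proof -
      have "\<And>x. V x * st x = V x * \<sigma> x + u * (V x * \<eta> x)"
        unfolding st_def by (simp add: algebra_simps)
      then show ?thesis unfolding A_def using iVs iVe by simp
    qed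
    have eS: "(\<integral>x. st x * G st x \<partial>lborel) = (\<integral>x. \<sigma> x * G \<sigma> x \<partial>lborel) + u * (2 * B) + u\<^sup>2 * Q"
    proof -
      have "\<And>x. st x * G st x = \<sigma> x * G \<sigma> x + u * (\<sigma> x * G \<eta> x) + u * (\<eta> x * G \<sigma> x) + u\<^sup>2 * (\<eta> x * G \<eta> x)"
        unfolding eG unfolding st_def by (simp add: algebra_simps power2_eq_square)
      then have "(\<integral>x. st x * G st x \<partial>lborel) = (\<integral>x. \<sigma> x * G \<sigma> x \<partial>lborel) + u * (\<integral>x. \<sigma> x * G \<eta> x \<partial>lborel)
          + u * (\<integral>x. \<eta> x * G \<sigma> x \<partial>lborel) + u\<^sup>2 * (\<integral>x. \<eta> x * G \<eta> x \<partial>lborel)"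
        using iss ise ies iee by simp
      then show ?thesis unfolding B_def Q_def fub by (simp add: algebra_simps)
    qed
    have "E_TF K xs \<sigma> \<le> E_TF K xs st" using min stM by auto
    then have "- (\<integral>x. V x * \<sigma> x \<partial>lborel) - 1/2 * (\<integral>x. \<sigma> x * G \<sigma> x \<partial>lborel) \<le>
       - ((\<integral>x. V x * \<sigma> x \<partial>lborel) + u * A) - 1/2 * ((\<integral>x. \<sigma> x * G \<sigma> x \<partial>lborel) + u * (2 * B) + u\<^sup>2 * Q)"
      unfolding E_expr V_def[symmetric] eV eS .
    then have "u * (A + B + u * Q / 2) \<le> 0" by (simp add: algebra_simps power2_eq_square)
    then show ?thesis using u by (simp add: mult_le_0_iff)
  qed
  have AB: "A + B \<le> 0"
  proof (rule ccontr)
    assume "\<not> A + B \<le> 0"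
    then have P: "A + B > 0" by simp
    define u where "u = min 1 ((A + B) / (\<bar>Q\<bar> + 1))"
    have u0: "0 < u" "u \<le> 1" unfolding u_def using P by auto
    have "u * \<bar>Q\<bar> \<le> (A + B) / (\<bar>Q\<bar> + 1) * \<bar>Q\<bar>"
      by (intro mult_right_mono) (auto simp: u_def)
    also have "\<dots> \<le> A + B" using P by (simp add: field_simps)
    finally have "u * \<bar>Q\<bar> \<le> A + B" .
    moreover have "- (u * \<bar>Q\<bar>) \<le> u * Q" 
    proof -
      have "u * (- \<bar>Q\<bar>) \<le> u * Q" using u0 by (intro mult_left_mono) auto
      then show ?thesis by simp
    qed
    ultimately have "A + B + u * Q / 2 > 0" using P by linarith
    with key[OF u0] show False by simp
  qed
  have "(\<integral>x. Phi_TF K xs \<sigma> x * (\<tau> x - \<sigma> x) \<partial>lborel) = (\<integral>x. V x * \<eta> x + \<eta> x * G \<sigma> x \<partial>lborel)"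
    unfolding Phi_G \<eta>_def V_def by (simp add: algebra_simps)
  also have "\<dots> = A + B" unfolding A_def B_def using iVe ies by simp
  finally show ?thesis using AB by simp
qed

lemma V_meas[measurable]: "V_nuc K xs \<in> borel_measurable lborel"
  unfolding V_nuc_def by measurable

lemma Phi_meas:
  assumes "cls f" shows "Phi_TF K xs f \<in> borel_measurable lborel"
proof -
  have [measurable]: "G f \<in> borel_measurable lborel" by (rule G_meas[OF assms])
  have "Phi_TF K xs f = (\<lambda>x. V_nuc K xs x + G f x)" by (simp add: Phi_G fun_eq_iff)
  then show ?thesis by simp
qed

lemma pos_set:
  fixes P :: "real^2 \<Rightarrow> bool" and S :: "nat \<Rightarrow> (real^2) set"
  assumes "\<not> (AE x in lborel. \<not> P x)"
    and "\<And>x. P x \<Longrightarrow> \<exists>n. x \<in> S n"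
  shows "\<exists>n. \<not> (AE x in lborel. x \<notin> S n)"
proof (rule ccontr)
  assume "\<not> (\<exists>n. \<not> (AE x in lborel. x \<notin> S n))"
  then have "AE x in lborel. \<forall>n. x \<notin> S n" by (simp add: AE_all_countable)
  then have "AE x in lborel. \<not> P x" by (rule eventually_mono) (use assms(2) in blast)
  with assms(1) show False by simp
qed

lemma set_props:
  fixes A :: "(real^2) set" and n :: nat
  assumes "A \<in> sets lborel" "\<not> (AE x in lborel. x \<notin> A)" "\<And>x. x \<in> A \<Longrightarrow> norm x \<le> real n"
  shows "emeasure lborel A = ennreal (measure lborel A)" "measure lborel A > 0"
    "emeasure lborel A < \<infinity>"
proof -
  have "bounded A" using assms(3) by (intro boundedI) auto
  then show fin: "emeasure lborel A < \<infinity>" by (rule emeasure_bounded_finite)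
  then show e: "emeasure lborel A = ennreal (measure lborel A)" by (simp add: emeasure_eq_ennreal_measure)
  have "emeasure lborel A \<noteq> 0" using assms(2) AE_iff_measurable[OF assms(1), of "\<lambda>x. x \<notin> A"] by auto
  then show "measure lborel A > 0" using e by (simp add: measure_nonneg zero_less_measure_iff fin)
qed

lemma ind_ln_integrable:
  fixes A :: "(real^2) set" and h :: "real^2 \<Rightarrow> real" and c :: real
  assumes "A \<in> sets lborel" "emeasure lborel A < \<infinity>" "\<And>x. x \<in> A \<Longrightarrow> norm x \<le> real n"
    and [measurable]: "h \<in> borel_measurable lborel" and hb: "\<And>x. x \<in> A \<Longrightarrow> \<bar>h x\<bar> \<le> c"
  shows "integrable lborel (\<lambda>x. indicator A x * h x)"
proof (rule Bochner_Integration.integrable_bound)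
  have [measurable]: "A \<in> sets borel" using assms(1) by simp
  show "integrable lborel (\<lambda>x. c * indicator A x :: real)" using assms(1,2) by auto
  show "(\<lambda>x. indicator A x * h x) \<in> borel_measurable lborel" by measurable
  show "AE x in lborel. norm (indicator A x * h x) \<le> norm (c * indicator A x :: real)"
    using hb by (intro AE_I2) (auto simp: indicator_def abs_le_iff intro: order_trans[OF _ abs_ge_self])
qed

lemma star:
  assumes K: "K \<ge> 1" and s: "\<sigma> \<in> M_TF K"
    and min: "\<forall>\<tau> \<in> M_TF K. E_TF K xs \<sigma> \<le> E_TF K xs \<tau>"
    and pq: "p < q"
  shows "(AE x in lborel. \<sigma> x < 1 \<longrightarrow> Phi_TF K xs \<sigma> x \<le> q) \<or>
         (AE x in lborel. \<sigma> x > 0 \<longrightarrow> Phi_TF K xs \<sigma> x \<ge> p)"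
proof (rule ccontr)
  define \<Phi> where "\<Phi> = Phi_TF K xs \<sigma>"
  have cs: "cls \<sigma>" using s by (rule M_cls)
  have [measurable]: "\<sigma> \<in> borel_measurable lborel" by (rule cls_meas[OF cs])
  have [measurable]: "\<Phi> \<in> borel_measurable lborel" unfolding \<Phi>_def by (rule Phi_meas[OF cs])
  assume nt: "\<not> ?thesis"
  have n1: "\<not> (AE x in lborel. \<not> (\<sigma> x < 1 \<and> \<Phi> x > q))"
  proof
    assume "AE x in lborel. \<not> (\<sigma> x < 1 \<and> \<Phi> x > q)"
    then have "AE x in lborel. \<sigma> x < 1 \<longrightarrow> Phi_TF K xs \<sigma> x \<le> q"
      by (rule eventually_mono) (auto simp: \<Phi>_def)
    with nt show False by simp
  qed
  have n2: "\<not> (AE x in lborel. \<not> (\<sigma> x > 0 \<and> \<Phi> x < p))"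
  proof
    assume "AE x in lborel. \<not> (\<sigma> x > 0 \<and> \<Phi> x < p)"
    then have "AE x in lborel. \<sigma> x > 0 \<longrightarrow> Phi_TF K xs \<sigma> x \<ge> p"
      by (rule eventually_mono) (auto simp: \<Phi>_def)
    with nt show False by simp
  qed
  define An where "An = (\<lambda>n::nat. {x. \<sigma> x < 1 - 1 / (real n + 1) \<and> q < \<Phi> x \<and> norm x \<le> real n \<and> \<bar>\<Phi> x\<bar> \<le> real n})"
  define Bn where "Bn = (\<lambda>n::nat. {x. 1 / (real n + 1) < \<sigma> x \<and> \<Phi> x < p \<and> norm x \<le> real n \<and> \<bar>\<Phi> x\<bar> \<le> real n})"
  have arch: "\<exists>n::nat. 1 / (real n + 1) < e \<and> r \<le> real n" if "e > 0" for e r :: real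
  proof -
    obtain n :: nat where nn: "\<bar>r\<bar> + 1 / e \<le> real n" using real_arch_simple by blast
    moreover have "0 \<le> 1 / e" using that by simp
    moreover have "1 / (real n + 1) < e"
    proof -
      have "1 / e < real n + 1" using calculation that by linarith
      then show ?thesis using that by (simp add: field_simps)
    qed
    moreover have "r \<le> real n"
    proof -
      have "0 \<le> 1 / e" using that by simp
      then show ?thesis using nn abs_ge_self[of r] by linarith
    qed
    ultimately show ?thesis by auto
  qed
  obtain n1 where nA: "\<not> (AE x in lborel. x \<notin> An n1)"
  proof -
    have "\<exists>n. \<not> (AE x in lborel. x \<notin> An n)"
    proof (rule pos_set[OF n1])
      fix x assume x: "\<sigma> x < 1 \<and> q < \<Phi> x"
      obtain n :: nat where "1 / (real n + 1) < 1 - \<sigma> x" "norm x + \<bar>\<Phi> x\<bar> \<le> real n"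
        using arch[of "1 - \<sigma> x" "norm x + \<bar>\<Phi> x\<bar>"] x by auto
      moreover have "norm x \<le> real n" "\<bar>\<Phi> x\<bar> \<le> real n"
        using calculation(2) norm_ge_zero[of x] abs_ge_zero[of "\<Phi> x"] by linarith+
      ultimately have "x \<in> An n" unfolding An_def using x by auto
      then show "\<exists>n. x \<in> An n" by blast
    qed
    then show ?thesis using that by blast
  qed
  obtain n2 where nB: "\<not> (AE x in lborel. x \<notin> Bn n2)"
  proof -
    have "\<exists>n. \<not> (AE x in lborel. x \<notin> Bn n)"
    proof (rule pos_set[OF n2])
      fix x assume x: "0 < \<sigma> x \<and> \<Phi> x < p"
      obtain n :: nat where "1 / (real n + 1) < \<sigma> x" "norm x + \<bar>\<Phi> x\<bar> \<le> real n"
        using arch[of "\<sigma> x" "norm x + \<bar>\<Phi> x\<bar>"] x by auto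
      moreover have "norm x \<le> real n" "\<bar>\<Phi> x\<bar> \<le> real n"
        using calculation(2) norm_ge_zero[of x] abs_ge_zero[of "\<Phi> x"] by linarith+
      ultimately have "x \<in> Bn n" unfolding Bn_def using x by auto
      then show "\<exists>n. x \<in> Bn n" by blast
    qed
    then show ?thesis using that by blast
  qed
  define A where "A = An n1"
  define B where "B = Bn n2"
  have [measurable]: "A \<in> sets lborel" "B \<in> sets lborel" unfolding A_def B_def An_def Bn_def by measurable
  have Anorm: "\<And>x. x \<in> A \<Longrightarrow> norm x \<le> real n1" unfolding A_def An_def by auto
  have Bnorm: "\<And>x. x \<in> B \<Longrightarrow> norm x \<le> real n2" unfolding B_def Bn_def by auto
  note PA = set_props[OF \<open>A \<in> sets lborel\<close> nA[folded A_def] Anorm]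
  note PB = set_props[OF \<open>B \<in> sets lborel\<close> nB[folded B_def] Bnorm]
  define mA where "mA = measure lborel A"
  define mB where "mB = measure lborel B"
  have mA0: "mA > 0" and mB0: "mB > 0" using PA PB unfolding mA_def mB_def by auto
  have disj: "\<And>x. x \<in> A \<Longrightarrow> x \<notin> B" unfolding A_def B_def An_def Bn_def using pq by auto
  define \<epsilon> where "\<epsilon> = min (1 / (real n1 + 1)) (1 / (real n2 + 1))"
  have \<epsilon>0: "\<epsilon> > 0" unfolding \<epsilon>_def by simp
  define a where "a = \<epsilon> * mB / (mA + mB)"
  define b where "b = \<epsilon> * mA / (mA + mB)"
  have a0: "0 < a" and b0: "0 < b" unfolding a_def b_def using mA0 mB0 \<epsilon>0 by auto
  have ae: "a \<le> \<epsilon>" unfolding a_def using mA0 mB0 \<epsilon>0 by (simp add: field_simps)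
  have be: "b \<le> \<epsilon>" unfolding b_def using mA0 mB0 \<epsilon>0 by (simp add: field_simps)
  have abm: "a * mA = b * mB" unfolding a_def b_def by (simp add: field_simps)
  define \<tau> where "\<tau> = (\<lambda>x. \<sigma> x + a * indicator A x - b * indicator B x)"
  have iA: "integrable lborel (indicator A :: real^2 \<Rightarrow> real)" by (rule integrable_real_indicator[OF \<open>A \<in> sets lborel\<close> PA(3)])
  have iB: "integrable lborel (indicator B :: real^2 \<Rightarrow> real)" by (rule integrable_real_indicator[OF \<open>B \<in> sets lborel\<close> PB(3)])
  have iAl: "integrable lborel (\<lambda>x. indicator A x * ln (2 + norm x))"
    by (rule ind_ln_integrable[OF \<open>A \<in> sets lborel\<close> PA(3) Anorm, where c = "ln (2 + real n1)"])
       (auto simp: Anorm add_pos_nonneg)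
  have iBl: "integrable lborel (\<lambda>x. indicator B x * ln (2 + norm x))"
    by (rule ind_ln_integrable[OF \<open>B \<in> sets lborel\<close> PB(3) Bnorm, where c = "ln (2 + real n2)"])
       (auto simp: Bnorm add_pos_nonneg)
  have tM: "\<tau> \<in> M_TF K"
  proof -
    have "\<tau> \<in> borel_measurable lborel" unfolding \<tau>_def by measurable
    moreover have "0 \<le> \<tau> x \<and> \<tau> x \<le> 1" for x
    proof -
      have s01: "0 \<le> \<sigma> x" "\<sigma> x \<le> 1" using s unfolding M_TF_def by auto
      have e1: "\<epsilon> \<le> 1 / (real n1 + 1)" "\<epsilon> \<le> 1 / (real n2 + 1)" unfolding \<epsilon>_def by auto
      show ?thesis
      proof (cases "x \<in> A")
        case True
        then have "x \<notin> B" by (rule disj)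
        moreover have "\<sigma> x < 1 - 1 / (real n1 + 1)" using True unfolding A_def An_def by auto
        ultimately show ?thesis unfolding \<tau>_def using True s01 a0 ae e1 by auto
      next
        case False
        show ?thesis
        proof (cases "x \<in> B")
          case True
          have "1 / (real n2 + 1) < \<sigma> x" using True unfolding B_def Bn_def by auto
          then show ?thesis unfolding \<tau>_def using True False s01 b0 be e1 by auto
        next
          case False2: False
          then show ?thesis unfolding \<tau>_def using False s01 by auto
        qed
      qed
    qed
    moreover have "integrable lborel (\<lambda>x. \<tau> x * ln (2 + norm x))"
    proof -
      have "integrable lborel (\<lambda>x. \<sigma> x * ln (2 + norm x) + a * (indicator A x * ln (2 + norm x))
              - b * (indicator B x * ln (2 + norm x)))"
        using s iAl iBl unfolding M_TF_def by auto
      moreover have "\<And>x. \<tau> x * ln (2 + norm x) = \<sigma> x * ln (2 + norm x) + a * (indicator A x * ln (2 + norm x))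
              - b * (indicator B x * ln (2 + norm x))" unfolding \<tau>_def by (simp add: algebra_simps)
      ultimately show ?thesis by simp
    qed
    moreover have "(\<integral>x. \<tau> x \<partial>lborel) = real K"
    proof -
      have "(\<integral>x. \<tau> x \<partial>lborel) = (\<integral>x. \<sigma> x \<partial>lborel) + a * mA - b * mB"
        unfolding \<tau>_def mA_def mB_def using cls_integrable[OF cs] iA iB by simp
      then show ?thesis using abm s unfolding M_TF_def by simp
    qed
    ultimately show ?thesis unfolding M_TF_def by auto
  qed
  have fv: "(\<integral>x. \<Phi> x * (\<tau> x - \<sigma> x) \<partial>lborel) \<le> 0"
    unfolding \<Phi>_def by (rule first_var[OF s tM min])
  have iPA: "integrable lborel (\<lambda>x. indicator A x * \<Phi> x)"
    by (rule ind_ln_integrable[OF \<open>A \<in> sets lborel\<close> PA(3) Anorm, where c = "real n1"])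
       (auto simp: A_def An_def)
  have iPB: "integrable lborel (\<lambda>x. indicator B x * \<Phi> x)"
    by (rule ind_ln_integrable[OF \<open>B \<in> sets lborel\<close> PB(3) Bnorm, where c = "real n2"])
       (auto simp: B_def Bn_def)
  have "(\<integral>x. \<Phi> x * (\<tau> x - \<sigma> x) \<partial>lborel) =
        (\<integral>x. a * (indicator A x * \<Phi> x) - b * (indicator B x * \<Phi> x) \<partial>lborel)"
    unfolding \<tau>_def by (simp add: algebra_simps)
  also have "\<dots> = a * (\<integral>x. indicator A x * \<Phi> x \<partial>lborel) - b * (\<integral>x. indicator B x * \<Phi> x \<partial>lborel)"
    using iPA iPB by simp
  finally have eq: "(\<integral>x. \<Phi> x * (\<tau> x - \<sigma> x) \<partial>lborel) =
      a * (\<integral>x. indicator A x * \<Phi> x \<partial>lborel) - b * (\<integral>x. indicator B x * \<Phi> x \<partial>lborel)" .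
  have gA: "q * mA \<le> (\<integral>x. indicator A x * \<Phi> x \<partial>lborel)"
  proof -
    have "(\<integral>x. q * indicator A x \<partial>lborel) \<le> (\<integral>x. indicator A x * \<Phi> x \<partial>lborel)"
    proof -
      have "\<And>x. q * indicator A x \<le> indicator A x * \<Phi> x" by (auto simp: indicator_def A_def An_def)
      then show ?thesis using iA iPA by (intro integral_mono) auto
    qed
    then show ?thesis unfolding mA_def by simp
  qed
  have gB: "(\<integral>x. indicator B x * \<Phi> x \<partial>lborel) \<le> p * mB"
  proof -
    have "(\<integral>x. indicator B x * \<Phi> x \<partial>lborel) \<le> (\<integral>x. p * indicator B x \<partial>lborel)"
    proof -
      have "\<And>x. indicator B x * \<Phi> x \<le> p * indicator B x" by (auto simp: indicator_def B_def Bn_def)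
      then show ?thesis using iB iPB by (intro integral_mono) auto
    qed
    then show ?thesis unfolding mB_def by simp
  qed
  have "a * (q * mA) - b * (p * mB) \<le> a * (\<integral>x. indicator A x * \<Phi> x \<partial>lborel) - b * (\<integral>x. indicator B x * \<Phi> x \<partial>lborel)"
    using gA gB a0 b0 by (intro diff_mono mult_left_mono) auto
  moreover have "a * (q * mA) - b * (p * mB) = (a * mA) * (q - p)" using abm by (simp add: algebra_simps)
  moreover have "(a * mA) * (q - p) > 0" using a0 mA0 pq by simp
  ultimately show False using fv eq by linarith
qed

lemma small_n: "(e::real) > 0 \<Longrightarrow> \<exists>n::nat. 1 / (real n + 1) < e"
proof -
  assume e: "e > 0"
  obtain n :: nat where "1 / e \<le> real n" using real_arch_simple by blast
  then have "1 / e < real n + 1" by linarith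
  then have "1 / (real n + 1) < e" using e by (simp add: field_simps)
  then show ?thesis by blast
qed

theorem lemma3p6:
  fixes K :: nat and xs :: "nat \<Rightarrow> real^2" and \<sigma> :: "real^2 \<Rightarrow> real"
  assumes "K \<ge> 1"
    and "\<sigma> \<in> M_TF K"
    and "\<forall>\<tau> \<in> M_TF K. E_TF K xs \<sigma> \<le> E_TF K xs \<tau>"
  shows "\<exists>lam::real. AE x in lborel.
           (\<sigma> x = 1 \<longrightarrow> Phi_TF K xs \<sigma> x \<ge> lam) \<and>
           (0 < \<sigma> x \<and> \<sigma> x < 1 \<longrightarrow> Phi_TF K xs \<sigma> x = lam) \<and>
           (\<sigma> x = 0 \<longrightarrow> Phi_TF K xs \<sigma> x \<le> lam)"
proof -
  define \<Phi> where "\<Phi> = Phi_TF K xs \<sigma>"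
  define S where "S = (\<lambda>q. AE x in lborel. \<sigma> x < 1 \<longrightarrow> \<Phi> x \<le> q)"
  define T where "T = (\<lambda>p. AE x in lborel. \<sigma> x > 0 \<longrightarrow> \<Phi> x \<ge> p)"
  have s01: "\<And>x. 0 \<le> \<sigma> x \<and> \<sigma> x \<le> 1" using assms(2) unfolding M_TF_def by auto
  have cs: "cls \<sigma>" using assms(2) by (rule M_cls)
  have [measurable]: "\<sigma> \<in> borel_measurable lborel" by (rule cls_meas[OF cs])
  have st: "S q \<or> T p" if "p < q" for p q
    using star[OF assms that] unfolding S_def T_def \<Phi>_def by blast
  have Smono: "S q'" if "S q" "q \<le> q'" for q q'
    using that(1) unfolding S_def by (rule eventually_mono) (use that(2) in auto)
  have Sclos: "S s" if "\<And>n::nat. S (s + 1 / (real n + 1))" for s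
  proof -
    have "AE x in lborel. \<forall>n::nat. \<sigma> x < 1 \<longrightarrow> \<Phi> x \<le> s + 1 / (real n + 1)"
    proof (subst AE_all_countable, intro allI)
      fix n :: nat
      show "AE x in lborel. \<sigma> x < 1 \<longrightarrow> \<Phi> x \<le> s + 1 / (real n + 1)" using that[of n] by (simp only: S_def)
    qed
    then show ?thesis unfolding S_def
    proof (rule eventually_mono)
      fix x assume h: "\<forall>n::nat. \<sigma> x < 1 \<longrightarrow> \<Phi> x \<le> s + 1 / (real n + 1)"
      show "\<sigma> x < 1 \<longrightarrow> \<Phi> x \<le> s"
      proof (rule impI, rule ccontr)
        assume "\<sigma> x < 1" "\<not> \<Phi> x \<le> s"
        then have "\<Phi> x - s > 0" by linarith
        then obtain n :: nat where n: "1 / (real n + 1) < \<Phi> x - s" using small_n by blast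
        have "\<Phi> x \<le> s + 1 / (real n + 1)" using h \<open>\<sigma> x < 1\<close> by blast
        with n show False by linarith
      qed
    qed
  qed
  have Tclos: "T s" if "\<And>n::nat. T (s - 1 / (real n + 1))" for s
  proof -
    have "AE x in lborel. \<forall>n::nat. \<sigma> x > 0 \<longrightarrow> \<Phi> x \<ge> s - 1 / (real n + 1)"
    proof (subst AE_all_countable, intro allI)
      fix n :: nat
      show "AE x in lborel. \<sigma> x > 0 \<longrightarrow> \<Phi> x \<ge> s - 1 / (real n + 1)" using that[of n] by (simp only: T_def)
    qed
    then show ?thesis unfolding T_def
    proof (rule eventually_mono)
      fix x assume h: "\<forall>n::nat. \<sigma> x > 0 \<longrightarrow> \<Phi> x \<ge> s - 1 / (real n + 1)"
      show "\<sigma> x > 0 \<longrightarrow> \<Phi> x \<ge> s"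
      proof (rule impI, rule ccontr)
        assume "\<sigma> x > 0" "\<not> \<Phi> x \<ge> s"
        then have "s - \<Phi> x > 0" by linarith
        then obtain n :: nat where n: "1 / (real n + 1) < s - \<Phi> x" using small_n by blast
        have "\<Phi> x \<ge> s - 1 / (real n + 1)" using h \<open>\<sigma> x > 0\<close> by blast
        with n show False by linarith
      qed
    qed
  qed
  have exS: "\<exists>q. S q"
  proof (rule ccontr)
    assume "\<not> (\<exists>q. S q)"
    then have "T p" for p using st[of p "p + 1"] by auto
    then have "AE x in lborel. \<forall>n::nat. \<sigma> x > 0 \<longrightarrow> \<Phi> x \<ge> real n"
    proof (subst AE_all_countable, intro allI)
      fix n :: nat
      show "AE x in lborel. \<sigma> x > 0 \<longrightarrow> \<Phi> x \<ge> real n" using \<open>\<And>p. T p\<close>[of "real n"] by (simp only: T_def)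
    qed
    then have "AE x in lborel. \<sigma> x = 0"
    proof (rule eventually_mono)
      fix x assume h: "\<forall>n::nat. \<sigma> x > 0 \<longrightarrow> \<Phi> x \<ge> real n"
      obtain n :: nat where "\<Phi> x + 1 \<le> real n" using real_arch_simple by blast
      moreover have "\<sigma> x > 0 \<longrightarrow> \<Phi> x \<ge> real n" using h by blast
      ultimately have "\<not> \<sigma> x > 0" by linarith
      then show "\<sigma> x = 0" using s01[of x] by simp
    qed
    have "(\<integral>x. \<sigma> x \<partial>lborel) = 0" using \<open>AE x in lborel. \<sigma> x = 0\<close> by (rule integral_eq_zero_AE)
    then have "real K = 0" using assms(2) unfolding M_TF_def by simp
    then show False using assms(1) by simp
  qed
  have bdd: "bdd_below {q. S q}"
  proof (rule ccontr)
    assume nb: "\<not> bdd_below {q. S q}"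
    have "S (- real n)" for n :: nat
    proof -
      from nb obtain q where "S q" "q < - real n" unfolding bdd_below_def by (auto simp: not_le)
      then show ?thesis using Smono by auto
    qed
    then have "AE x in lborel. \<forall>n::nat. \<sigma> x < 1 \<longrightarrow> \<Phi> x \<le> - real n"
    proof (subst AE_all_countable, intro allI)
      fix n :: nat
      show "AE x in lborel. \<sigma> x < 1 \<longrightarrow> \<Phi> x \<le> - real n" using \<open>\<And>n. S (- real n)\<close>[of n] by (simp only: S_def)
    qed
    then have ae1: "AE x in lborel. \<sigma> x = 1"
    proof (rule eventually_mono)
      fix x assume h: "\<forall>n::nat. \<sigma> x < 1 \<longrightarrow> \<Phi> x \<le> - real n"
      obtain n :: nat where "- \<Phi> x + 1 \<le> real n" using real_arch_simple by blast
      moreover have "\<sigma> x < 1 \<longrightarrow> \<Phi> x \<le> - real n" using h by blast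
      ultimately have "\<not> \<sigma> x < 1" by linarith
      then show "\<sigma> x = 1" using s01[of x] by simp
    qed
    have "integrable lborel \<sigma>" by (rule cls_integrable[OF cs])
    then have fin: "(\<integral>\<^sup>+ x. ennreal (norm (\<sigma> x)) \<partial>lborel) < \<infinity>" by (simp add: integrable_iff_bounded)
    have "(\<integral>\<^sup>+ x. ennreal (norm (\<sigma> x)) \<partial>lborel) = (\<integral>\<^sup>+ x. 1 \<partial>(lborel :: (real^2) measure))"
      by (intro nn_integral_cong_AE) (use ae1 in \<open>auto elim!: eventually_mono\<close>)
    also have "\<dots> = \<infinity>" by simp
    finally show False using fin by simp
  qed
  define s where "s = Inf {q. S q}"
  have Ss: "S s"
  proof (rule Sclos)
    fix n :: nat
    have "Inf {q. S q} < s + 1 / (real n + 1)" unfolding s_def by simp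
    then obtain q where "S q" "q < s + 1 / (real n + 1)"
      using cInf_lessD[of "{q. S q}"] exS by auto
    then show "S (s + 1 / (real n + 1))" using Smono by auto
  qed
  have Ts: "T s"
  proof (rule Tclos)
    fix n :: nat
    define p where "p = s - 1 / (real n + 1)"
    define q where "q = s - 1 / (2 * (real n + 1))"
    have "p < q" "q < s" unfolding p_def q_def by (auto simp: field_simps)
    have "\<not> S q"
    proof
      assume "S q"
      then have "s \<le> q" unfolding s_def using bdd by (intro cInf_lower) auto
      with \<open>q < s\<close> show False by simp
    qed
    then show "T (s - 1 / (real n + 1))" using st[OF \<open>p < q\<close>] unfolding p_def by auto
  qed
  have "AE x in lborel. (\<sigma> x < 1 \<longrightarrow> \<Phi> x \<le> s) \<and> (\<sigma> x > 0 \<longrightarrow> \<Phi> x \<ge> s)"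
    using Ss Ts unfolding S_def T_def by (rule eventually_conj)
  then have "AE x in lborel.
           (\<sigma> x = 1 \<longrightarrow> Phi_TF K xs \<sigma> x \<ge> s) \<and>
           (0 < \<sigma> x \<and> \<sigma> x < 1 \<longrightarrow> Phi_TF K xs \<sigma> x = s) \<and>
           (\<sigma> x = 0 \<longrightarrow> Phi_TF K xs \<sigma> x \<le> s)"
    by (rule eventually_mono) (auto simp: \<Phi>_def)
  then show ?thesis by blast
qed

end
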